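(* Let $G=(V,E)$ have $|V|=2$, let $N>3$, $\varepsilon=0$ and $s_0\in S_{nc}$. Then: (1) for every $\gamma\in(0,1)$, $\Gamma_N(G|s_0,\gamma,0)$ has at least one nonpositional trigger strategies profile; (2) $\Gamma_N(G|s_0,\gamma,0)$ has at least one positional trigger strategies profile if and only if $\gamma\in\left(0,\frac1{N-1}\right]$.
   Context: Setting. $G=(V,E)$ is a finite, simple, connected, undirected graph; $N\ge 3$ is an integer; $\gamma\in(0,1)$ and $\varepsilon\in[0,\frac1{N-1}]$ are parameters. There are $N$ tokens: cops $C_1,\dots,C_{N-1}$ (tokens $1,\dots,N-1$) and the robber $R$ (token $N$). A state is $s=(x^1,\dots,x^N,n)$ where $x^i\in V$ is the position of token $i$ and $n\in\{1,\dots,N\}$ is the token that moves next; $S^n$ denotes the set of states with token $n$ to move. A state is a capture state if $x^i=x^N$ for some $i\le N-1$; $S_{nc}$ is the set of noncapture states. In each turn exactly one token, the one to move, moves to a vertex of its closed neighbourhood (it may stay put); the order of moves is $C_1,C_2,\dots,C_{N-1},R,C_1,\dots$. Starting from an initial state $s_0\in S_{nc}$ at time $0$, the capture time is the first time $t$ at which a capture state occurs (infinite if never); after capture the game is over. Auxiliary games. For $m\in\{1,\dots,N\}$, $\Gamma_N^m(G|s_0,\gamma,\varepsilon)$ is the two-player zero-sum game in which player $P_m$ controls token $m$ and player $P_{-m}$ controls all other tokens, with the following payoff to $P_m$ ($P_{-m}$ receives its negative): $0$ if no capture ever occurs; if capture occurs at time $t$: for $m=N$, $-\gamma^t$; for $m\le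 N-1$, $\frac{1-\varepsilon}{K}\gamma^t$ if exactly $K\in\{1,\dots,N-2\}$ cops, including $C_m$, are on the robber's vertex, $\frac{\varepsilon}{N-K-1}\gamma^t$ if exactly $K\in\{1,\dots,N-2\}$ cops, not including $C_m$, are on the robber's vertex, and $\frac{\gamma^t}{N-1}$ if all $N-1$ cops are on the robber's vertex. $\Gamma^N_N$ is the modified cops-and-robber (CR) game. A pure positional strategy for token $n$ maps each state in $S^n\cap S_{nc}$ to an allowed next vertex. Each $\Gamma^m_N$ has optimal pure positional strategies (optimal from every initial state). For $m,n\in\{1,\dots,N\}$, $\phi^n_m$ denotes the strategy of token $n$ in a chosen pair of optimal pure positional strategies of $\Gamma^m_N$ (so $\phi^m_m$ is $P_m$'s optimal strategy and $(\phi^n_m)_{n\ne m}$ is $P_{-m}$'s). $\widehat\Sigma^n$ is the set of pure positional strategies of token $n$ that are components of optimal strategy pairs of $\Gamma^N_N$ (CR-optimal strategies). Trigger strategies. Given a choice of $(\phi^n_m)_{n,m}$, the trigger strategies profile $\bar\sigma=(\bar\sigma^1,\dots,\bar\sigma^N)$ of the $N$-player SCAR game $\Gamma_N(G|s_0,\gamma,\varepsilon)$ (same board and moves; player $n$ controls token $n$) is: token $n$, at current state $s$, plays $\phi^n_n(s)$ as long as every other player $m$ has followed $\phi^m_m$, and plays $\phi^n_m(s)$ from the moment a player $m\neq n$ deviates from $\phi^m_m$. Different choices of the optimal strategies give different trigger strategies profiles. $\bar\sigma$ is called positional if for all $n,m\in\{1,\dots,N\}$ there is $\widehat\sigma^n\in\widehat\Sigma^n$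 with $\phi^n_m(s)=\widehat\sigma^n(s)$ for every state $s\in S^n\cap S_{nc}$ reachable from $s_0$ by a finite sequence of legal moves passing only through noncapture states; otherwise $\bar\sigma$ is nonpositional. *)

theory Defs
  imports Complex_Main
begin

definition simple_graph :: "'v set \<Rightarrow> ('v \<Rightarrow> 'v \<Rightarrow> bool) \<Rightarrow> bool" where
  "simple_graph V E \<longleftrightarrow> finite V \<and> (\<forall>x y. E x y \<longrightarrow> x \<in> V \<and> y \<in> V)
     \<and> (\<forall>x y. E x y \<longrightarrow> E y x) \<and> (\<forall>x. \<not> E x x)"

definition graph_connected :: "'v set \<Rightarrow> ('v \<Rightarrow> 'v \<Rightarrow> bool) \<Rightarrow> bool" where
  "graph_connected V E \<longleftrightarrow> V \<noteq> {} \<and> (\<forall>x\<in>V. \<forall>y\<in>V. E\<^sup>*\<^sup>* x y)"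

definition nbhd :: "'v set \<Rightarrow> ('v \<Rightarrow> 'v \<Rightarrow> bool) \<Rightarrow> 'v \<Rightarrow> 'v set" where
  "nbhd V E x = {y \<in> V. y = x \<or> E x y}"

(* A state (xs, n): xs ! (i-1) is the position x^i of token i (i = 1..N),
   n is the token to move.  Tokens 1..N-1 are cops, token N is the robber. *)
type_synonym 'v state = "'v list \<times> nat"

definition pos :: "'v state \<Rightarrow> nat \<Rightarrow> 'v" where
  "pos s i = fst s ! (i - 1)"

definition states :: "'v set \<Rightarrow> nat \<Rightarrow> 'v state set" where
  "states V N = {(xs, n). length xs = N \<and> set xs \<subseteq> V \<and> n \<in> {1..N}}"

definition capture :: "nat \<Rightarrow> 'v state \<Rightarrow> bool" where
  "capture N s \<longleftrightarrow> (\<exists>i\<in>{1..N-1}. pos s i = pos s N)"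

definition S_nc :: "'v set \<Rightarrow> nat \<Rightarrow> 'v state set" where
  "S_nc V N = {s \<in> states V N. \<not> capture N s}"

definition next_tok :: "nat \<Rightarrow> nat \<Rightarrow> nat" where
  "next_tok N n = (if n = N then 1 else n + 1)"

definition move :: "nat \<Rightarrow> 'v state \<Rightarrow> 'v \<Rightarrow> 'v state" where
  "move N s v = ((fst s)[snd s - 1 := v], next_tok N (snd s))"

(* general (history dependent) pure strategy of token n: histories are
   nonempty lists of states, the last one being the current state *)
definition gstrategy :: "'v set \<Rightarrow> ('v \<Rightarrow> 'v \<Rightarrow> bool) \<Rightarrow> nat \<Rightarrow> nat
    \<Rightarrow> ('v state list \<Rightarrow> 'v) \<Rightarrow> bool" where
  "gstrategy V E N n \<tau> \<longleftrightarrow> (\<forall>h. h \<noteq> [] \<longrightarrow> last h \<in> S_nc V N \<longrightarrow> snd (last h) = n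
      \<longrightarrow> \<tau> h \<in> nbhd V E (pos (last h) n))"

(* pure positional strategy of token n: a map S^n \<inter> S_nc \<rightarrow> allowed vertices
   (values outside S^n \<inter> S_nc are irrelevant) *)
definition pstrategy :: "'v set \<Rightarrow> ('v \<Rightarrow> 'v \<Rightarrow> bool) \<Rightarrow> nat \<Rightarrow> nat
    \<Rightarrow> ('v state \<Rightarrow> 'v) \<Rightarrow> bool" where
  "pstrategy V E N n \<sigma> \<longleftrightarrow> (\<forall>s \<in> S_nc V N. snd s = n \<longrightarrow> \<sigma> s \<in> nbhd V E (pos s n))"

definition as_general :: "('v state \<Rightarrow> 'v) \<Rightarrow> ('v state list \<Rightarrow> 'v)" where
  "as_general \<sigma> = (\<lambda>h. \<sigma> (last h))"

fun hist :: "nat \<Rightarrow> (nat \<Rightarrow> 'v state list \<Rightarrow> 'v) \<Rightarrow> 'v state \<Rightarrow> nat \<Rightarrow> 'v state list" where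
  "hist N \<rho> s0 0 = [s0]"
| "hist N \<rho> s0 (Suc t) = (let h = hist N \<rho> s0 t; s = last h in h @ [move N s (\<rho> (snd s) h)])"

definition play :: "nat \<Rightarrow> (nat \<Rightarrow> 'v state list \<Rightarrow> 'v) \<Rightarrow> 'v state \<Rightarrow> nat \<Rightarrow> 'v state" where
  "play N \<rho> s0 t = last (hist N \<rho> s0 t)"

definition reward :: "nat \<Rightarrow> real \<Rightarrow> nat \<Rightarrow> 'v state \<Rightarrow> real" where
  "reward N \<epsilon> m s =
     (if m = N then -1
      else (let K = card {i \<in> {1..N-1}. pos s i = pos s N} in
            if K = N - 1 then 1 / (real N - 1)
            else if pos s m = pos s N then (1 - \<epsilon>) / real K
            else \<epsilon> / (real N - real K - 1)))"

definition payoff :: "nat \<Rightarrow> real \<Rightarrow> real \<Rightarrow> nat \<Rightarrow> (nat \<Rightarrow> 'v state list \<Rightarrow> 'v)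
    \<Rightarrow> 'v state \<Rightarrow> real" where
  "payoff N \<gamma> \<epsilon> m \<rho> s0 =
     (if \<exists>t. capture N (play N \<rho> s0 t)
      then (let T = (LEAST t. capture N (play N \<rho> s0 t))
            in reward N \<epsilon> m (play N \<rho> s0 T) * \<gamma> ^ T)
      else 0)"

(* \<sigma> (a profile of pure positional strategies, \<sigma> n for token n) is a pair of
   optimal strategies of \<Gamma>^m_N (P_m: token m, P_{-m}: the other tokens),
   optimal from every initial noncapture state, against arbitrary
   (history dependent) deviations *)
definition opt_pair :: "'v set \<Rightarrow> ('v \<Rightarrow> 'v \<Rightarrow> bool) \<Rightarrow> nat \<Rightarrow> real \<Rightarrow> real \<Rightarrow> nat
    \<Rightarrow> (nat \<Rightarrow> 'v state \<Rightarrow> 'v) \<Rightarrow> bool" where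
  "opt_pair V E N \<gamma> \<epsilon> m \<sigma> \<longleftrightarrow>
     (\<forall>n\<in>{1..N}. pstrategy V E N n (\<sigma> n)) \<and>
     (\<forall>s0 \<in> S_nc V N.
        (\<forall>\<tau>. gstrategy V E N m \<tau> \<longrightarrow>
           payoff N \<gamma> \<epsilon> m ((\<lambda>n. as_general (\<sigma> n))(m := \<tau>)) s0
             \<le> payoff N \<gamma> \<epsilon> m (\<lambda>n. as_general (\<sigma> n)) s0) \<and>
        (\<forall>\<rho>. (\<forall>n\<in>{1..N} - {m}. gstrategy V E N n (\<rho> n)) \<longrightarrow>
           payoff N \<gamma> \<epsilon> m (\<lambda>n. as_general (\<sigma> n)) s0
             \<le> payoff N \<gamma> \<epsilon> m (\<rho>(m := as_general (\<sigma> m))) s0))"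

definition CR_opt :: "'v set \<Rightarrow> ('v \<Rightarrow> 'v \<Rightarrow> bool) \<Rightarrow> nat \<Rightarrow> real \<Rightarrow> real \<Rightarrow> nat
    \<Rightarrow> ('v state \<Rightarrow> 'v) set" where
  "CR_opt V E N \<gamma> \<epsilon> n = {\<sigma> n | \<sigma>. opt_pair V E N \<gamma> \<epsilon> N \<sigma>}"

definition step_rel :: "'v set \<Rightarrow> ('v \<Rightarrow> 'v \<Rightarrow> bool) \<Rightarrow> nat \<Rightarrow> 'v state \<Rightarrow> 'v state \<Rightarrow> bool" where
  "step_rel V E N s s' \<longleftrightarrow> s \<in> S_nc V N \<and> (\<exists>v \<in> nbhd V E (pos s (snd s)). s' = move N s v)"

(* s reachable from s0 by finitely many legal moves through noncapture states
   (s itself is additionally required to be noncapture where used) *)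
definition reachable :: "'v set \<Rightarrow> ('v \<Rightarrow> 'v \<Rightarrow> bool) \<Rightarrow> nat \<Rightarrow> 'v state \<Rightarrow> 'v state \<Rightarrow> bool" where
  "reachable V E N s0 s \<longleftrightarrow> (step_rel V E N)\<^sup>*\<^sup>* s0 s"

(* a choice \<phi> n m = \<phi>^n_m of optimal pure positional strategies: for every m,
   (\<phi>^n_m)_n is an optimal pair of \<Gamma>^m_N.  Each such choice determines a
   trigger strategies profile of \<Gamma>_N(G|s0,\<gamma>,\<epsilon>). *)
definition trigger_choice :: "'v set \<Rightarrow> ('v \<Rightarrow> 'v \<Rightarrow> bool) \<Rightarrow> nat \<Rightarrow> real \<Rightarrow> real
    \<Rightarrow> (nat \<Rightarrow> nat \<Rightarrow> 'v state \<Rightarrow> 'v) \<Rightarrow> bool" where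
  "trigger_choice V E N \<gamma> \<epsilon> \<phi> \<longleftrightarrow> (\<forall>m\<in>{1..N}. opt_pair V E N \<gamma> \<epsilon> m (\<lambda>n. \<phi> n m))"

definition positional_trigger :: "'v set \<Rightarrow> ('v \<Rightarrow> 'v \<Rightarrow> bool) \<Rightarrow> nat \<Rightarrow> real \<Rightarrow> real
    \<Rightarrow> 'v state \<Rightarrow> (nat \<Rightarrow> nat \<Rightarrow> 'v state \<Rightarrow> 'v) \<Rightarrow> bool" where
  "positional_trigger V E N \<gamma> \<epsilon> s0 \<phi> \<longleftrightarrow>
     (\<forall>n\<in>{1..N}. \<forall>m\<in>{1..N}. \<exists>\<sigma>h \<in> CR_opt V E N \<gamma> \<epsilon> n.
        \<forall>s. s \<in> S_nc V N \<and> snd s = n \<and> reachable V E N s0 s \<longrightarrow> \<phi> n m s = \<sigma>h s)"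

end

theory Submission
  imports Defs
begin


lemma play_0[simp]: "play N \<rho> s0 0 = s0" by (simp add: play_def)
lemma play_Suc: "play N \<rho> s0 (Suc t) = move N (play N \<rho> s0 t) (\<rho> (snd (play N \<rho> s0 t)) (hist N \<rho> s0 t))"
  by (simp add: play_def Let_def)
lemma as_general_hist[simp]: "as_general \<sigma> (hist N \<rho> s0 t) = \<sigma> (play N \<rho> s0 t)"
  by (simp add: as_general_def play_def)

lemma payoff_at:
  assumes "\<forall>t'\<le>t. \<not> capture N (play N \<rho> s0 t')" "capture N (play N \<rho> s0 (Suc t))"
  shows "payoff N \<gamma> \<epsilon> m \<rho> s0 = reward N \<epsilon> m (play N \<rho> s0 (Suc t)) * \<gamma> ^ Suc t"
proof -
  have "(LEAST t. capture N (play N \<rho> s0 t)) = Suc t"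
    apply (rule Least_equality) using assms not_less_eq_eq by auto
  thus ?thesis using assms unfolding payoff_def by auto
qed

lemma reward_bounds:
  assumes "3 < N" "m < N"
  shows "0 \<le> reward N 0 m s \<and> reward N 0 m s \<le> 1"
proof -
  have k: "0 \<le> 1 / real K \<and> 1 / real K \<le> (1::real)" for K :: nat
    by (cases "K = 0") auto
  have "0 \<le> 1 / (real N - 1) \<and> 1 / (real N - 1) \<le> (1::real)" using assms by auto
  thus ?thesis using assms k unfolding reward_def Let_def by auto
qed

lemma payoff_bounds:
  assumes "\<forall>t'\<le>t. \<not> capture N (play N \<rho> s0 t')" "0<\<gamma>" "\<gamma><1" "3<N"
  shows "m < N \<Longrightarrow> 0 \<le> payoff N \<gamma> 0 m \<rho> s0 \<and> payoff N \<gamma> 0 m \<rho> s0 \<le> \<gamma>^Suc t"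
    and "-(\<gamma>^Suc t) \<le> payoff N \<gamma> 0 N \<rho> s0 \<and> payoff N \<gamma> 0 N \<rho> s0 \<le> 0"
proof -
  have pg: "0 \<le> \<gamma>^Suc t" using assms by simp
  show "m < N \<Longrightarrow> 0 \<le> payoff N \<gamma> 0 m \<rho> s0 \<and> payoff N \<gamma> 0 m \<rho> s0 \<le> \<gamma>^Suc t"
  proof (cases "\<exists>t. capture N (play N \<rho> s0 t)")
    case False thus ?thesis using pg unfolding payoff_def by auto
  next
    case True
    define T where "T = (LEAST t. capture N (play N \<rho> s0 t))"
    have cT: "capture N (play N \<rho> s0 T)" using True LeastI_ex unfolding T_def by metis
    have "Suc t \<le> T" using cT assms(1) not_less_eq_eq by blast
    hence le: "\<gamma>^T \<le> \<gamma>^Suc t" using assms power_decreasing[of "Suc t" T \<gamma>] by linarith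
    assume "m < N"
    hence rb: "0 \<le> reward N 0 m (play N \<rho> s0 T) \<and> reward N 0 m (play N \<rho> s0 T) \<le> 1"
      using reward_bounds assms by blast
    have "payoff N \<gamma> 0 m \<rho> s0 = reward N 0 m (play N \<rho> s0 T) * \<gamma>^T"
      using True unfolding payoff_def T_def Let_def by auto
    moreover have "0 \<le> reward N 0 m (play N \<rho> s0 T) * \<gamma>^T" using rb assms by simp
    moreover have "reward N 0 m (play N \<rho> s0 T) * \<gamma>^T \<le> 1 * \<gamma>^T"
      using rb assms by (intro mult_right_mono) auto
    ultimately show ?thesis using le by simp
  qed
  show "-(\<gamma>^Suc t) \<le> payoff N \<gamma> 0 N \<rho> s0 \<and> payoff N \<gamma> 0 N \<rho> s0 \<le> 0"
  proof (cases "\<exists>t. capture N (play N \<rho> s0 t)")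
    case False thus ?thesis using pg unfolding payoff_def by auto
  next
    case True
    define T where "T = (LEAST t. capture N (play N \<rho> s0 t))"
    have cT: "capture N (play N \<rho> s0 T)" using True LeastI_ex unfolding T_def by metis
    have "Suc t \<le> T" using cT assms(1) not_less_eq_eq by blast
    hence le: "\<gamma>^T \<le> \<gamma>^Suc t" using assms power_decreasing[of "Suc t" T \<gamma>] by linarith
    have "payoff N \<gamma> 0 N \<rho> s0 = - (\<gamma>^T)"
      using True unfolding payoff_def T_def reward_def Let_def by auto
    thus ?thesis using le assms by simp
  qed
qed


definition PA :: "nat \<Rightarrow> nat \<Rightarrow> 'v state \<Rightarrow> 'v" where
  "PA N n s = pos s N"
definition PB :: "nat \<Rightarrow> nat \<Rightarrow> 'v state \<Rightarrow> 'v" where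
  "PB N n s = (if n = N then pos s 1 else pos s N)"
definition PC :: "nat \<Rightarrow> nat \<Rightarrow> 'v state \<Rightarrow> 'v" where
  "PC N n s = (if n = 1 then pos s 1 else pos s N)"

definition R :: "nat \<Rightarrow> nat \<Rightarrow> nat \<Rightarrow> real" where
  "R N m n = (if m = N then -1 else if n = N then 1/(real N - 1) else if m = n then 1 else 0)"

definition inv :: "nat \<Rightarrow> (nat \<Rightarrow> 'v state list \<Rightarrow> 'v) \<Rightarrow> 'v state \<Rightarrow> 'v list \<Rightarrow> nat \<Rightarrow> nat \<Rightarrow> bool" where
  "inv N \<rho> s0 xs t n \<longleftrightarrow> (\<forall>t'\<le>t. fst (play N \<rho> s0 t') = xs) \<and> play N \<rho> s0 t = (xs, n) \<and> n \<in> {1..N}"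

locale G2 =
  fixes V :: "'v set" and E :: "'v \<Rightarrow> 'v \<Rightarrow> bool" and N :: nat and a b :: 'v
  assumes V: "V = {a,b}" and ab: "a \<noteq> b" and Eab: "E a b" "E b a" and N3: "3 < N"
begin

lemma nbhd_V: "x \<in> V \<Longrightarrow> nbhd V E x = V"
  using V Eab unfolding nbhd_def by auto

lemma nbhd_sub: "nbhd V E x \<subseteq> V" unfolding nbhd_def by auto

lemma two: "x \<in> V \<Longrightarrow> y \<in> V \<Longrightarrow> z \<in> V \<Longrightarrow> x \<noteq> z \<Longrightarrow> y \<noteq> z \<Longrightarrow> x = y"
  using V by auto

lemma Snc_D:
  assumes "(xs, n0) \<in> S_nc V N"
  shows "length xs = N" "set xs \<subseteq> V" "1 \<le> n0" "n0 \<le> N"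
    "\<And>i. 1 \<le> i \<Longrightarrow> i \<le> N - 1 \<Longrightarrow> xs!(i-1) \<noteq> xs!(N-1)"
    "\<And>j. j < N \<Longrightarrow> xs!j \<in> V"
  using assms unfolding S_nc_def states_def capture_def pos_def by auto

lemma pos_V: "s \<in> S_nc V N \<Longrightarrow> k \<in> {1..N} \<Longrightarrow> pos s k \<in> V"
  unfolding S_nc_def states_def pos_def by (cases s) auto

lemma cap_fst: "(xs, n0) \<in> S_nc V N \<Longrightarrow> fst s = xs \<Longrightarrow> \<not> capture N s"
  unfolding S_nc_def capture_def pos_def by auto

lemma Snc_fst: "(xs, n0) \<in> S_nc V N \<Longrightarrow> n \<in> {1..N} \<Longrightarrow> (xs, n) \<in> S_nc V N"
  unfolding S_nc_def states_def capture_def pos_def by auto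

lemma next_tok_range: "n \<in> {1..N} \<Longrightarrow> next_tok N n \<in> {1..N}"
  unfolding next_tok_def by auto

lemma inv0: "(xs, n0) \<in> S_nc V N \<Longrightarrow> inv N \<rho> (xs, n0) xs 0 n0"
  using Snc_D unfolding inv_def by auto

lemma inv_stay:
  assumes "inv N \<rho> s0 xs t n" "\<rho> n (hist N \<rho> s0 t) = xs!(n-1)"
  shows "inv N \<rho> s0 xs (Suc t) (next_tok N n)"
proof -
  have p: "play N \<rho> s0 (Suc t) = (xs, next_tok N n)"
    using assms unfolding play_Suc inv_def move_def by simp
  show ?thesis using assms p next_tok_range unfolding inv_def
    by (metis fst_conv le_Suc_eq)
qed

lemma act_state:
  assumes cfg: "(xs, n0) \<in> S_nc V N" and n: "1 \<le> n" "n \<le> N" and v: "v \<in> V" "v \<noteq> xs!(n-1)"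
    and m: "1 \<le> m" "m \<le> N"
  shows "capture N (xs[n-1 := v], k) \<and> reward N 0 m (xs[n-1 := v], k) = R N m n"
proof (cases "n = N")
  case True
  note D = Snc_D[OF cfg]
  have xi: "xs!(i-1) = v" if "1 \<le> i" "i \<le> N - 1" for i
  proof -
    have "i - 1 < N" "N - 1 < N" using that N3 by auto
    hence "xs!(i-1) \<in> V" "xs!(N-1) \<in> V" using D(6) by auto
    moreover have "xs!(i-1) \<noteq> xs!(N-1)" using D(5) that by blast
    ultimately show ?thesis using two[of "xs!(i-1)" v "xs!(N-1)"] v True by blast
  qed
  have pi: "pos (xs[n-1 := v], k) i = v" if "1 \<le> i" "i \<le> N" for i
  proof (cases "i = N")
    case True thus ?thesis using \<open>n = N\<close> D(1) N3 by (simp add: pos_def)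
  next
    case False
    hence "i - 1 \<noteq> n - 1" using that \<open>n = N\<close> by simp
    hence "pos (xs[n-1 := v], k) i = xs!(i-1)" by (simp add: pos_def)
    thus ?thesis using xi that False by simp
  qed
  have S: "{i \<in> {1..N-1}. pos (xs[n-1 := v], k) i = pos (xs[n-1 := v], k) N} = {1..N-1}"
    using pi N3 by auto
  have c: "capture N (xs[n-1 := v], k)"
    unfolding capture_def using pi N3 by force
  show ?thesis using c S True unfolding reward_def R_def Let_def by simp
next
  case False
  note D = Snc_D[OF cfg]
  have "n - 1 < N" "N - 1 < N" using n N3 by auto
  hence inV: "xs!(n-1) \<in> V" "xs!(N-1) \<in> V" using D(6) by auto
  have "xs!(n-1) \<noteq> xs!(N-1)" using D(5) n False by simp
  hence vr: "v = xs!(N-1)"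
    using two[of v "xs!(N-1)" "xs!(n-1)"] inV v by metis
  have pN: "pos (xs[n-1 := v], k) N = xs!(N-1)"
    using n False by (simp add: pos_def)
  have pn: "pos (xs[n-1 := v], k) n = xs!(N-1)"
    using n False D(1) vr by (simp add: pos_def)
  have po: "pos (xs[n-1 := v], k) i \<noteq> xs!(N-1)" if "1 \<le> i" "i \<le> N-1" "i \<noteq> n" for i
  proof -
    have "i - 1 \<noteq> n - 1" using that n by simp
    hence "pos (xs[n-1 := v], k) i = xs!(i-1)" by (simp add: pos_def)
    thus ?thesis using D(5)[OF that(1,2)] by simp
  qed
  have S: "{i \<in> {1..N-1}. pos (xs[n-1 := v], k) i = pos (xs[n-1 := v], k) N} = {n}"
    using po pN pn n False by auto
  have c: "capture N (xs[n-1 := v], k)"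
    unfolding capture_def using S by blast
  have pm: "pos (xs[n-1 := v], k) m = pos (xs[n-1 := v], k) N \<longleftrightarrow> m = n" if "m < N"
  proof
    assume "pos (xs[n-1 := v], k) m = pos (xs[n-1 := v], k) N"
    thus "m = n" using po[of m] pN that m by (cases "m = n") auto
  qed (use pn pN in simp)
  have "N - 1 \<noteq> 1" using N3 by simp
  thus ?thesis using c S False pm m unfolding reward_def R_def Let_def by auto
qed

lemma inv_act:
  assumes cfg: "(xs, n0) \<in> S_nc V N" and I: "inv N \<rho> s0 xs t n"
    and v: "\<rho> n (hist N \<rho> s0 t) \<in> V" "\<rho> n (hist N \<rho> s0 t) \<noteq> xs!(n-1)"
    and m: "1 \<le> m" "m \<le> N"
  shows "payoff N \<gamma> 0 m \<rho> s0 = R N m n * \<gamma> ^ Suc t"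
proof -
  have p: "play N \<rho> s0 (Suc t) = (xs[n-1 := \<rho> n (hist N \<rho> s0 t)], next_tok N n)"
    using I unfolding play_Suc inv_def move_def by simp
  have nc: "\<forall>t'\<le>t. \<not> capture N (play N \<rho> s0 t')"
    using I cap_fst[OF cfg] unfolding inv_def by auto
  have "1 \<le> n" "n \<le> N" using I unfolding inv_def by auto
  from act_state[OF cfg this v m, of "next_tok N n"]
  show ?thesis using payoff_at[OF nc] p by simp
qed

lemma inv_bounds:
  assumes cfg: "(xs, n0) \<in> S_nc V N" and I: "inv N \<rho> s0 xs t n" and g: "0 < \<gamma>" "\<gamma> < 1"
  shows "m < N \<Longrightarrow> 0 \<le> payoff N \<gamma> 0 m \<rho> s0 \<and> payoff N \<gamma> 0 m \<rho> s0 \<le> \<gamma>^Suc t"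
    and "-(\<gamma>^Suc t) \<le> payoff N \<gamma> 0 N \<rho> s0 \<and> payoff N \<gamma> 0 N \<rho> s0 \<le> 0"
proof -
  have nc: "\<forall>t'\<le>t. \<not> capture N (play N \<rho> s0 t')"
    using I cap_fst[OF cfg] unfolding inv_def by auto
  show "m < N \<Longrightarrow> 0 \<le> payoff N \<gamma> 0 m \<rho> s0 \<and> payoff N \<gamma> 0 m \<rho> s0 \<le> \<gamma>^Suc t"
    using payoff_bounds(1)[OF nc g N3] by blast
  show "-(\<gamma>^Suc t) \<le> payoff N \<gamma> 0 N \<rho> s0 \<and> payoff N \<gamma> 0 N \<rho> s0 \<le> 0"
    using payoff_bounds(2)[OF nc g N3] by blast
qed

lemma inv_gstrat:
  assumes cfg: "(xs, n0) \<in> S_nc V N" and I: "inv N \<rho> s0 xs t n" and g: "gstrategy V E N n \<tau>"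
  shows "\<tau> (hist N \<rho> s0 t) \<in> V"
proof -
  have "hist N \<rho> s0 t \<noteq> []" by (cases t) (auto simp: Let_def)
  moreover have "last (hist N \<rho> s0 t) = (xs, n)" using I unfolding inv_def play_def by auto
  moreover have "(xs, n) \<in> S_nc V N" using Snc_fst[OF cfg] I unfolding inv_def by auto
  ultimately show ?thesis using g nbhd_sub unfolding gstrategy_def by force
qed

lemma inv_play: "inv N \<rho> s0 xs t n \<Longrightarrow> play N \<rho> s0 t = (xs, n)"
  unfolding inv_def by auto

end


context G2 begin

lemma inv_act_cop:
  assumes cfg: "(xs, n0) \<in> S_nc V N" and I: "inv N \<rho> s0 xs t n" and n: "n < N"
    and v: "\<rho> n (hist N \<rho> s0 t) = xs!(N-1)" and m: "m \<in> {1..N}"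
  shows "payoff N \<gamma> 0 m \<rho> s0 = R N m n * \<gamma> ^ Suc t"
proof (rule inv_act[OF cfg I _ _])
  have n1: "1 \<le> n" using I unfolding inv_def by auto
  have "N - 1 < N" using N3 by auto
  thus "\<rho> n (hist N \<rho> s0 t) \<in> V" using v Snc_D(6)[OF cfg] by auto
  have "n \<le> N - 1" using n by simp
  from Snc_D(5)[OF cfg n1 this]
  show "\<rho> n (hist N \<rho> s0 t) \<noteq> xs ! (n - 1)" using v by simp
qed (use m in auto)

lemma inv_act_rob:
  assumes cfg: "(xs, n0) \<in> S_nc V N" and I: "inv N \<rho> s0 xs t N"
    and v: "\<rho> N (hist N \<rho> s0 t) = xs!0" and m: "m \<in> {1..N}"
  shows "payoff N \<gamma> 0 m \<rho> s0 = R N m N * \<gamma> ^ Suc t"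
proof (rule inv_act[OF cfg I _ _])
  have "0 < N" using N3 by auto
  thus "\<rho> N (hist N \<rho> s0 t) \<in> V" using v Snc_D(6)[OF cfg] by auto
  show "\<rho> N (hist N \<rho> s0 t) \<noteq> xs ! (N - 1)" using v Snc_D(5)[OF cfg, of 1] N3 by auto
qed (use m in auto)

lemma inv_split:
  assumes cfg: "(xs, n0) \<in> S_nc V N" and I: "inv N \<rho> s0 xs t n"
    and v: "\<rho> n (hist N \<rho> s0 t) \<in> V" and m: "m \<in> {1..N}"
  shows "(\<rho> n (hist N \<rho> s0 t) = xs!(n-1) \<and> inv N \<rho> s0 xs (Suc t) (next_tok N n))
         \<or> payoff N \<gamma> 0 m \<rho> s0 = R N m n * \<gamma> ^ Suc t"
  using inv_stay[OF I] inv_act[OF cfg I v] m by auto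

lemma pstrat_pos:
  assumes "\<And>s. \<exists>k\<in>{1..N}. \<sigma> s = pos s k"
  shows "pstrategy V E N n \<sigma>"
  unfolding pstrategy_def
proof (intro ballI impI)
  fix s assume s: "s \<in> S_nc V N" "snd s = n"
  hence "n \<in> {1..N}" unfolding S_nc_def states_def by auto
  hence "nbhd V E (pos s n) = V" using pos_V[OF s(1)] nbhd_V by auto
  moreover obtain k where "k \<in> {1..N}" "\<sigma> s = pos s k" using assms by blast
  ultimately show "\<sigma> s \<in> nbhd V E (pos s n)" using pos_V[OF s(1)] by auto
qed

lemma pstrat_PA: "pstrategy V E N n (PA N n)"
  by (rule pstrat_pos) (use N3 in \<open>auto simp: PA_def\<close>)
lemma pstrat_PB: "pstrategy V E N n (PB N n)"
  by (rule pstrat_pos) (use N3 in \<open>auto simp: PB_def\<close>)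
lemma pstrat_PC: "pstrategy V E N n (PC N n)"
  by (rule pstrat_pos) (use N3 in \<open>auto simp: PC_def\<close>)

lemma next_tok_N[simp]: "next_tok N N = 1" by (simp add: next_tok_def)
lemma next_tok_lt: "n < N \<Longrightarrow> next_tok N n = Suc n" by (simp add: next_tok_def)

end

declare hist.simps[simp del]
context G2 begin

lemma opt_PA_cop:
  assumes m: "1 \<le> m" "m < N" and g: "0 < \<gamma>" "\<gamma> < 1" and g1: "m = 1 \<longrightarrow> \<gamma> \<le> 1 / (real N - 1)"
  shows "opt_pair V E N \<gamma> 0 m (PA N)"
  unfolding opt_pair_def
proof (intro conjI ballI allI impI)
  fix n show "pstrategy V E N n (PA N n)" by (rule pstrat_PA)
next
  fix s0 \<tau> assume s0: "s0 \<in> S_nc V N" and tau: "gstrategy V E N m \<tau>"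
  obtain xs n0 where s0e: "s0 = (xs, n0)" by (cases s0)
  have cfg: "(xs, n0) \<in> S_nc V N" using s0 s0e by simp
  define \<rho> where "\<rho> = (\<lambda>n. as_general (PA N n))(m := \<tau>)"
  define \<sigma> where "\<sigma> = (\<lambda>n. as_general (PA N n :: 'v state \<Rightarrow> 'v))"
  have mN: "m \<in> {1..N}" using m by auto
  have Ir: "inv N \<rho> s0 xs 0 n0" and Is: "inv N \<sigma> s0 xs 0 n0" using inv0[OF cfg] s0e by auto
  have n0: "1 \<le> n0" "n0 \<le> N" using Snc_D[OF cfg] by auto
  show "payoff N \<gamma> 0 m \<rho> s0 \<le> payoff N \<gamma> 0 m \<sigma> s0"
  proof (cases "n0 = N")
    case False
    have "payoff N \<gamma> 0 m \<sigma> s0 = R N m n0 * \<gamma> ^ 1"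
      using inv_act_cop[OF cfg Is _ _ mN] False n0 inv_play[OF Is]
      by (simp add: \<sigma>_def PA_def pos_def)
    moreover have "payoff N \<gamma> 0 m \<rho> s0 \<le> R N m n0 * \<gamma> ^ 1"
    proof (cases "n0 = m")
      case True thus ?thesis using inv_bounds(1)[OF cfg Ir g, of m] m by (simp add: R_def)
    next
      case False
      thus ?thesis using inv_act_cop[OF cfg Ir _ _ mN] \<open>n0 \<noteq> N\<close> n0 inv_play[OF Ir]
        by (simp add: \<rho>_def PA_def pos_def)
    qed
    ultimately show ?thesis by simp
  next
    case True
    have Ir1: "inv N \<rho> s0 xs 1 1"
      using inv_stay[OF Ir] True inv_play[OF Ir] m by (simp add: \<rho>_def PA_def pos_def)
    have Is1: "inv N \<sigma> s0 xs 1 1"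
      using inv_stay[OF Is] True inv_play[OF Is] m by (simp add: \<sigma>_def PA_def pos_def)
    have "payoff N \<gamma> 0 m \<sigma> s0 = R N m 1 * \<gamma> ^ 2"
      using inv_act_cop[OF cfg Is1 _ _ mN] inv_play[OF Is1] N3
      by (simp add: \<sigma>_def PA_def pos_def numeral_2_eq_2)
    moreover have "payoff N \<gamma> 0 m \<rho> s0 \<le> R N m 1 * \<gamma> ^ 2"
    proof (cases "m = 1")
      case True thus ?thesis using inv_bounds(1)[OF cfg Ir1 g, of m] m
        by (simp add: R_def numeral_2_eq_2)
    next
      case False
      thus ?thesis using inv_act_cop[OF cfg Ir1 _ _ mN] inv_play[OF Ir1] N3
        by (simp add: \<rho>_def PA_def pos_def numeral_2_eq_2)
    qed
    ultimately show ?thesis by simp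
  qed
next
  fix s0 \<rho>0 assume s0: "s0 \<in> S_nc V N" and rho: "\<forall>n\<in>{1..N} - {m}. gstrategy V E N n (\<rho>0 n)"
  obtain xs n0 where s0e: "s0 = (xs, n0)" by (cases s0)
  have cfg: "(xs, n0) \<in> S_nc V N" using s0 s0e by simp
  define \<rho> where "\<rho> = \<rho>0(m := as_general (PA N m))"
  define \<sigma> where "\<sigma> = (\<lambda>n. as_general (PA N n :: 'v state \<Rightarrow> 'v))"
  have mN: "m \<in> {1..N}" using m by auto
  have Ir: "inv N \<rho> s0 xs 0 n0" and Is: "inv N \<sigma> s0 xs 0 n0" using inv0[OF cfg] s0e by auto
  have n0: "1 \<le> n0" "n0 \<le> N" using Snc_D[OF cfg] by auto
  have pos\<rho>: "0 \<le> payoff N \<gamma> 0 m \<rho> s0" using inv_bounds(1)[OF cfg Ir g, of m] m by simp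
  show "payoff N \<gamma> 0 m \<sigma> s0 \<le> payoff N \<gamma> 0 m \<rho> s0"
  proof (cases "n0 = N")
    case False
    have "payoff N \<gamma> 0 m \<sigma> s0 = R N m n0 * \<gamma> ^ 1"
      using inv_act_cop[OF cfg Is _ _ mN] False n0 inv_play[OF Is]
      by (simp add: \<sigma>_def PA_def pos_def)
    moreover
    have "R N m n0 * \<gamma> ^ 1 \<le> payoff N \<gamma> 0 m \<rho> s0"
    proof (cases "n0 = m")
      case True thus ?thesis using inv_act_cop[OF cfg Ir _ _ mN] \<open>n0 \<noteq> N\<close> n0 inv_play[OF Ir]
        by (simp add: \<rho>_def PA_def pos_def)
    next
      case False thus ?thesis using pos\<rho> m \<open>n0 \<noteq> N\<close> by (simp add: R_def)
    qed
    ultimately show ?thesis by simp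
  next
    case True
    have Is1: "inv N \<sigma> s0 xs 1 1"
      using inv_stay[OF Is] True inv_play[OF Is] m by (simp add: \<sigma>_def PA_def pos_def)
    have ps: "payoff N \<gamma> 0 m \<sigma> s0 = R N m 1 * \<gamma> ^ 2"
      using inv_act_cop[OF cfg Is1 _ _ mN] inv_play[OF Is1] N3
      by (simp add: \<sigma>_def PA_def pos_def numeral_2_eq_2)
    show ?thesis
    proof (cases "m = 1")
      case False thus ?thesis using ps pos\<rho> m by (simp add: R_def)
    next
      case m1: True
      have gN: "gstrategy V E N N (\<rho> N)" using rho m True n0 by (simp add: \<rho>_def)
      have vN: "\<rho> N (hist N \<rho> s0 0) \<in> V" using inv_gstrat[OF cfg _ gN] Ir True by simp
      from inv_split[OF cfg _ _ mN, of \<rho> s0 0 N \<gamma>] Ir True vN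
      consider "inv N \<rho> s0 xs 1 1" | "payoff N \<gamma> 0 m \<rho> s0 = R N m N * \<gamma> ^ 1" by auto
      thus ?thesis
      proof cases
        case 1
        have "payoff N \<gamma> 0 m \<rho> s0 = R N m 1 * \<gamma> ^ 2"
          using inv_act_cop[OF cfg 1 _ _ mN] inv_play[OF 1] N3 m1
          by (simp add: \<rho>_def PA_def pos_def numeral_2_eq_2)
        thus ?thesis using ps by simp
      next
        case 2
        have "\<gamma> * \<gamma> \<le> \<gamma> * (1 / (real N - 1))" using g1 m1 g by (intro mult_left_mono) auto
        thus ?thesis using ps 2 m1 N3 by (simp add: R_def power2_eq_square)
      qed
    qed
  qed
qed

end

context G2 begin

lemma opt_PA_rob:
  assumes g: "0 < \<gamma>" "\<gamma> < 1"
  shows "opt_pair V E N \<gamma> 0 N (PA N)"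
  unfolding opt_pair_def
proof (intro conjI ballI allI impI)
  fix n show "pstrategy V E N n (PA N n)" by (rule pstrat_PA)
next
  fix s0 \<tau> assume s0: "s0 \<in> S_nc V N" and tau: "gstrategy V E N N \<tau>"
  obtain xs n0 where s0e: "s0 = (xs, n0)" by (cases s0)
  have cfg: "(xs, n0) \<in> S_nc V N" using s0 s0e by simp
  define \<rho> where "\<rho> = (\<lambda>n. as_general (PA N n))(N := \<tau>)"
  define \<sigma> where "\<sigma> = (\<lambda>n. as_general (PA N n :: 'v state \<Rightarrow> 'v))"
  have mN: "N \<in> {1..N}" using N3 by auto
  have Ir: "inv N \<rho> s0 xs 0 n0" and Is: "inv N \<sigma> s0 xs 0 n0" using inv0[OF cfg] s0e by auto
  have n0: "1 \<le> n0" "n0 \<le> N" using Snc_D[OF cfg] by auto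
  show "payoff N \<gamma> 0 N \<rho> s0 \<le> payoff N \<gamma> 0 N \<sigma> s0"
  proof (cases "n0 = N")
    case False
    have "payoff N \<gamma> 0 N \<sigma> s0 = R N N n0 * \<gamma> ^ 1"
      using inv_act_cop[OF cfg Is _ _ mN] False n0 inv_play[OF Is]
      by (simp add: \<sigma>_def PA_def pos_def)
    moreover have "payoff N \<gamma> 0 N \<rho> s0 = R N N n0 * \<gamma> ^ 1"
      using inv_act_cop[OF cfg Ir _ _ mN] False n0 inv_play[OF Ir]
      by (simp add: \<rho>_def PA_def pos_def)
    ultimately show ?thesis by simp
  next
    case True
    have Is1: "inv N \<sigma> s0 xs 1 1"
      using inv_stay[OF Is] True inv_play[OF Is] by (simp add: \<sigma>_def PA_def pos_def)
    have ps: "payoff N \<gamma> 0 N \<sigma> s0 = - (\<gamma> ^ 2)"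
      using inv_act_cop[OF cfg Is1 _ _ mN] inv_play[OF Is1] N3
      by (simp add: \<sigma>_def PA_def pos_def numeral_2_eq_2 R_def)
    have vN: "\<rho> N (hist N \<rho> s0 0) \<in> V" using inv_gstrat[OF cfg _ tau] Ir True by (simp add: \<rho>_def)
    from inv_split[OF cfg _ _ mN, of \<rho> s0 0 N \<gamma>] Ir True vN
    consider "inv N \<rho> s0 xs 1 1" | "payoff N \<gamma> 0 N \<rho> s0 = R N N N * \<gamma> ^ 1" by auto
    thus ?thesis
    proof cases
      case 1
      have "payoff N \<gamma> 0 N \<rho> s0 = R N N 1 * \<gamma> ^ 2"
        using inv_act_cop[OF cfg 1 _ _ mN] inv_play[OF 1] N3
        by (simp add: \<rho>_def PA_def pos_def numeral_2_eq_2)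
      thus ?thesis using ps by (simp add: R_def)
    next
      case 2
      have "\<gamma> * \<gamma> \<le> \<gamma>" using g by (simp add: mult_le_cancel_left1)
      thus ?thesis using ps 2 by (simp add: R_def power2_eq_square)
    qed
  qed
next
  fix s0 \<rho>0 assume s0: "s0 \<in> S_nc V N" and rho: "\<forall>n\<in>{1..N} - {N}. gstrategy V E N n (\<rho>0 n)"
  obtain xs n0 where s0e: "s0 = (xs, n0)" by (cases s0)
  have cfg: "(xs, n0) \<in> S_nc V N" using s0 s0e by simp
  define \<rho> where "\<rho> = \<rho>0(N := as_general (PA N N))"
  define \<sigma> where "\<sigma> = (\<lambda>n. as_general (PA N n :: 'v state \<Rightarrow> 'v))"
  have mN: "N \<in> {1..N}" using N3 by auto
  have Ir: "inv N \<rho> s0 xs 0 n0" and Is: "inv N \<sigma> s0 xs 0 n0" using inv0[OF cfg] s0e by auto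
  have n0: "1 \<le> n0" "n0 \<le> N" using Snc_D[OF cfg] by auto
  show "payoff N \<gamma> 0 N \<sigma> s0 \<le> payoff N \<gamma> 0 N \<rho> s0"
  proof (cases "n0 = N")
    case False
    have "payoff N \<gamma> 0 N \<sigma> s0 = R N N n0 * \<gamma> ^ 1"
      using inv_act_cop[OF cfg Is _ _ mN] False n0 inv_play[OF Is]
      by (simp add: \<sigma>_def PA_def pos_def)
    thus ?thesis using inv_bounds(2)[OF cfg Ir g] by (simp add: R_def)
  next
    case True
    have Is1: "inv N \<sigma> s0 xs 1 1"
      using inv_stay[OF Is] True inv_play[OF Is] by (simp add: \<sigma>_def PA_def pos_def)
    have ps: "payoff N \<gamma> 0 N \<sigma> s0 = - (\<gamma> ^ 2)"
      using inv_act_cop[OF cfg Is1 _ _ mN] inv_play[OF Is1] N3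
      by (simp add: \<sigma>_def PA_def pos_def numeral_2_eq_2 R_def)
    have Ir1: "inv N \<rho> s0 xs 1 1"
      using inv_stay[OF Ir] True inv_play[OF Ir] by (simp add: \<rho>_def PA_def pos_def)
    show ?thesis using inv_bounds(2)[OF cfg Ir1 g] ps by (simp add: numeral_2_eq_2)
  qed
qed

end

context G2 begin

lemma opt_PB:
  assumes g: "0 < \<gamma>" "\<gamma> < 1" and g1: "1 / (real N - 1) \<le> \<gamma>"
  shows "opt_pair V E N \<gamma> 0 1 (PB N)"
  unfolding opt_pair_def
proof (intro conjI ballI allI impI)
  fix n show "pstrategy V E N n (PB N n)" by (rule pstrat_PB)
next
  fix s0 \<tau> assume s0: "s0 \<in> S_nc V N" and tau: "gstrategy V E N 1 \<tau>"
  obtain xs n0 where s0e: "s0 = (xs, n0)" by (cases s0)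
  have cfg: "(xs, n0) \<in> S_nc V N" using s0 s0e by simp
  define \<rho> where "\<rho> = (\<lambda>n. as_general (PB N n))(1 := \<tau>)"
  define \<sigma> where "\<sigma> = (\<lambda>n. as_general (PB N n :: 'v state \<Rightarrow> 'v))"
  have mN: "1 \<in> {1..N}" using N3 by auto
  have Ir: "inv N \<rho> s0 xs 0 n0" and Is: "inv N \<sigma> s0 xs 0 n0" using inv0[OF cfg] s0e by auto
  have n0: "1 \<le> n0" "n0 \<le> N" using Snc_D[OF cfg] by auto
  show "payoff N \<gamma> 0 1 \<rho> s0 \<le> payoff N \<gamma> 0 1 \<sigma> s0"
  proof (cases "n0 = N")
    case False
    have "payoff N \<gamma> 0 1 \<sigma> s0 = R N 1 n0 * \<gamma> ^ 1"
      using inv_act_cop[OF cfg Is _ _ mN] False n0 inv_play[OF Is]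
      by (simp add: \<sigma>_def PB_def pos_def)
    moreover have "payoff N \<gamma> 0 1 \<rho> s0 \<le> R N 1 n0 * \<gamma> ^ 1"
    proof (cases "n0 = 1")
      case True thus ?thesis using inv_bounds(1)[OF cfg Ir g, of 1] N3 by (simp add: R_def)
    next
      case False
      thus ?thesis using inv_act_cop[OF cfg Ir _ _ mN] \<open>n0 \<noteq> N\<close> n0 inv_play[OF Ir]
        by (simp add: \<rho>_def PB_def pos_def)
    qed
    ultimately show ?thesis by simp
  next
    case True
    have "payoff N \<gamma> 0 1 \<sigma> s0 = R N 1 N * \<gamma> ^ 1"
      using inv_act_rob[OF cfg _ _ mN] Is True inv_play[OF Is] N3
      by (simp add: \<sigma>_def PB_def pos_def)
    moreover have "payoff N \<gamma> 0 1 \<rho> s0 = R N 1 N * \<gamma> ^ 1"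
      using inv_act_rob[OF cfg _ _ mN] Ir True inv_play[OF Ir] N3
      by (simp add: \<rho>_def PB_def pos_def)
    ultimately show ?thesis by simp
  qed
next
  fix s0 \<rho>0 assume s0: "s0 \<in> S_nc V N" and rho: "\<forall>n\<in>{1..N} - {1}. gstrategy V E N n (\<rho>0 n)"
  obtain xs n0 where s0e: "s0 = (xs, n0)" by (cases s0)
  have cfg: "(xs, n0) \<in> S_nc V N" using s0 s0e by simp
  define \<rho> where "\<rho> = \<rho>0(1 := as_general (PB N 1))"
  define \<sigma> where "\<sigma> = (\<lambda>n. as_general (PB N n :: 'v state \<Rightarrow> 'v))"
  have mN: "1 \<in> {1..N}" using N3 by auto
  have Ir: "inv N \<rho> s0 xs 0 n0" and Is: "inv N \<sigma> s0 xs 0 n0" using inv0[OF cfg] s0e by auto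
  have n0: "1 \<le> n0" "n0 \<le> N" using Snc_D[OF cfg] by auto
  have pos\<rho>: "0 \<le> payoff N \<gamma> 0 1 \<rho> s0" using inv_bounds(1)[OF cfg Ir g, of 1] N3 by simp
  show "payoff N \<gamma> 0 1 \<sigma> s0 \<le> payoff N \<gamma> 0 1 \<rho> s0"
  proof (cases "n0 = N")
    case False
    have "payoff N \<gamma> 0 1 \<sigma> s0 = R N 1 n0 * \<gamma> ^ 1"
      using inv_act_cop[OF cfg Is _ _ mN] False n0 inv_play[OF Is]
      by (simp add: \<sigma>_def PB_def pos_def)
    moreover
    have "R N 1 n0 * \<gamma> ^ 1 \<le> payoff N \<gamma> 0 1 \<rho> s0"
    proof (cases "n0 = 1")
      case True thus ?thesis using inv_act_cop[OF cfg Ir _ _ mN] \<open>n0 \<noteq> N\<close> n0 inv_play[OF Ir]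
        by (simp add: \<rho>_def PB_def pos_def)
    next
      case False thus ?thesis using pos\<rho> \<open>n0 \<noteq> N\<close> N3 by (simp add: R_def)
    qed
    ultimately show ?thesis by simp
  next
    case True
    have ps: "payoff N \<gamma> 0 1 \<sigma> s0 = R N 1 N * \<gamma> ^ 1"
      using inv_act_rob[OF cfg _ _ mN] Is True inv_play[OF Is] N3
      by (simp add: \<sigma>_def PB_def pos_def)
    have gN: "gstrategy V E N N (\<rho> N)" using rho N3 by (simp add: \<rho>_def)
    have vN: "\<rho> N (hist N \<rho> s0 0) \<in> V" using inv_gstrat[OF cfg _ gN] Ir True by simp
    from inv_split[OF cfg _ _ mN, of \<rho> s0 0 N \<gamma>] Ir True vN
    consider "inv N \<rho> s0 xs 1 1" | "payoff N \<gamma> 0 1 \<rho> s0 = R N 1 N * \<gamma> ^ 1" by auto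
    thus ?thesis
    proof cases
      case 1
      have "payoff N \<gamma> 0 1 \<rho> s0 = R N 1 1 * \<gamma> ^ 2"
        using inv_act_cop[OF cfg 1 _ _ mN] inv_play[OF 1] N3
        by (simp add: \<rho>_def PB_def pos_def numeral_2_eq_2)
      moreover have "\<gamma> * (1 / (real N - 1)) \<le> \<gamma> * \<gamma>" using g1 g by (intro mult_left_mono) auto
      ultimately show ?thesis using ps N3 by (simp add: R_def power2_eq_square)
    next
      case 2 thus ?thesis using ps by simp
    qed
  qed
qed

lemma pay_PC:
  assumes cfg: "(xs, n0) \<in> S_nc V N" and s0e: "s0 = (xs, n0)"
    and rho: "\<And>n. n \<noteq> 3 \<Longrightarrow> \<rho> n = as_general (PC N n)" and n03: "n0 \<noteq> 3"
  shows "payoff N \<gamma> 0 3 \<rho> s0 = 0"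
proof -
  have mN: "3 \<in> {1..N}" using N3 by auto
  have I: "inv N \<rho> s0 xs 0 n0" using inv0[OF cfg] s0e by auto
  have n0: "1 \<le> n0" "n0 \<le> N" using Snc_D[OF cfg] by auto
  have x: "xs!(1-1) = xs!0" by simp
  have case1: "payoff N \<gamma> 0 3 \<rho> s0 = 0" if I1: "inv N \<rho> s0 xs t 1" for t
  proof -
    have I2: "inv N \<rho> s0 xs (Suc t) 2"
      using inv_stay[OF I1] inv_play[OF I1] rho[of 1] N3
      by (simp add: PC_def pos_def next_tok_def numeral_2_eq_2)
    show ?thesis using inv_act_cop[OF cfg I2 _ _ mN] inv_play[OF I2] rho[of 2] N3
      by (simp add: PC_def pos_def R_def)
  qed
  show ?thesis
  proof (cases "n0 = N")
    case True
    have I1: "inv N \<rho> s0 xs 1 1"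
      using inv_stay[OF I] True inv_play[OF I] rho[of N] N3 by (simp add: PC_def pos_def)
    show ?thesis by (rule case1[OF I1])
  next
    case False
    show ?thesis
    proof (cases "n0 = 1")
      case True thus ?thesis using case1 I by simp
    next
      case False
      thus ?thesis using inv_act_cop[OF cfg I _ _ mN] inv_play[OF I] rho[of n0] n03 \<open>n0 \<noteq> N\<close> n0 N3
        by (simp add: PC_def pos_def R_def)
    qed
  qed
qed

lemma pay_PC3:
  assumes cfg: "(xs, 3) \<in> S_nc V N" and s0e: "s0 = (xs, 3)"
    and rho: "\<rho> 3 = as_general (PC N 3)"
  shows "payoff N \<gamma> 0 3 \<rho> s0 = \<gamma>"
proof -
  have mN: "3 \<in> {1..N}" using N3 by auto
  have I: "inv N \<rho> s0 xs 0 3" using inv0[OF cfg] s0e by auto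
  show ?thesis using inv_act_cop[OF cfg I _ _ mN] inv_play[OF I] rho N3
    by (simp add: PC_def pos_def R_def)
qed

lemma opt_PC:
  assumes g: "0 < \<gamma>" "\<gamma> < 1"
  shows "opt_pair V E N \<gamma> 0 3 (PC N)"
  unfolding opt_pair_def
proof (intro conjI ballI allI impI)
  fix n show "pstrategy V E N n (PC N n)" by (rule pstrat_PC)
next
  fix s0 \<tau> assume s0: "s0 \<in> S_nc V N" and tau: "gstrategy V E N 3 \<tau>"
  obtain xs n0 where s0e: "s0 = (xs, n0)" by (cases s0)
  have cfg: "(xs, n0) \<in> S_nc V N" using s0 s0e by simp
  define \<rho> where "\<rho> = (\<lambda>n. as_general (PC N n))(3 := \<tau>)"
  define \<sigma> where "\<sigma> = (\<lambda>n. as_general (PC N n :: 'v state \<Rightarrow> 'v))"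
  show "payoff N \<gamma> 0 3 \<rho> s0 \<le> payoff N \<gamma> 0 3 \<sigma> s0"
  proof (cases "n0 = 3")
    case True
    have "payoff N \<gamma> 0 3 \<sigma> s0 = \<gamma>" using pay_PC3[of xs s0 \<sigma> \<gamma>] cfg s0e True by (simp add: \<sigma>_def)
    moreover have "inv N \<rho> s0 xs 0 n0" using inv0[OF cfg] s0e by auto
    ultimately show ?thesis using inv_bounds(1)[OF cfg _ g, of \<rho> s0 0 n0 3] N3 by simp
  next
    case False
    show ?thesis using pay_PC[OF cfg s0e _ False, of \<sigma>] pay_PC[OF cfg s0e _ False, of \<rho>]
      by (simp add: \<sigma>_def \<rho>_def)
  qed
next
  fix s0 \<rho>0 assume s0: "s0 \<in> S_nc V N" and rho: "\<forall>n\<in>{1..N} - {3}. gstrategy V E N n (\<rho>0 n)"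
  obtain xs n0 where s0e: "s0 = (xs, n0)" by (cases s0)
  have cfg: "(xs, n0) \<in> S_nc V N" using s0 s0e by simp
  define \<rho> where "\<rho> = \<rho>0(3 := as_general (PC N 3))"
  define \<sigma> where "\<sigma> = (\<lambda>n. as_general (PC N n :: 'v state \<Rightarrow> 'v))"
  have Ir: "inv N \<rho> s0 xs 0 n0" using inv0[OF cfg] s0e by auto
  show "payoff N \<gamma> 0 3 \<sigma> s0 \<le> payoff N \<gamma> 0 3 \<rho> s0"
  proof (cases "n0 = 3")
    case True
    show ?thesis using pay_PC3[of xs s0 \<sigma> \<gamma>] pay_PC3[of xs s0 \<rho> \<gamma>] cfg s0e True
      by (simp add: \<sigma>_def \<rho>_def)
  next
    case False
    show ?thesis using pay_PC[OF cfg s0e _ False, of \<sigma>] inv_bounds(1)[OF cfg Ir g, of 3] N3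
      by (simp add: \<sigma>_def)
  qed
qed

end


lemma gstrat_of_pstrat: "pstrategy V E N n \<sigma> \<Longrightarrow> gstrategy V E N n (as_general \<sigma>)"
  unfolding pstrategy_def gstrategy_def as_general_def by auto

context G2 begin

lemma pstrat_val:
  assumes "pstrategy V E N n \<sigma>" "(xs, n) \<in> S_nc V N"
  shows "\<sigma> (xs, n) \<in> V"
  using assms nbhd_sub unfolding pstrategy_def by force

lemma CR_cop:
  assumes opt: "opt_pair V E N \<gamma> 0 N \<sigma>" and g: "0 < \<gamma>" "\<gamma> < 1"
    and s: "(xs, n) \<in> S_nc V N" and n: "1 \<le> n" "n < N"
  shows "\<sigma> n (xs, n) = xs!(N-1)"
proof (rule ccontr)
  assume ne: "\<sigma> n (xs, n) \<noteq> xs!(N-1)"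
  note D = Snc_D[OF s]
  have ps: "\<forall>k\<in>{1..N}. pstrategy V E N k (\<sigma> k)" using opt unfolding opt_pair_def by blast
  hence vV: "\<sigma> n (xs, n) \<in> V" using pstrat_val s n by auto
  have "n - 1 < N" "N - 1 < N" using n by auto
  hence inV: "xs!(n-1) \<in> V" "xs!(N-1) \<in> V" using D(6) by auto
  have "xs!(n-1) \<noteq> xs!(N-1)" using D(5)[of n] n by simp
  hence stay: "\<sigma> n (xs, n) = xs!(n-1)" using two[of "\<sigma> n (xs, n)" "xs!(n-1)" "xs!(N-1)"] vV inV ne by blast
  define \<rho> where "\<rho> = (\<lambda>k. as_general (\<sigma> k))(n := as_general (PA N n))"
  have gs: "\<forall>k\<in>{1..N} - {N}. gstrategy V E N k (\<rho> k)"
    using ps N3 by (auto simp: \<rho>_def intro!: gstrat_of_pstrat pstrat_PA)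
  have le: "payoff N \<gamma> 0 N (\<lambda>k. as_general (\<sigma> k)) (xs, n) \<le> payoff N \<gamma> 0 N (\<rho>(N := as_general (\<sigma> N))) (xs, n)"
    using opt s gs unfolding opt_pair_def by blast
  have req: "\<rho>(N := as_general (\<sigma> N)) = \<rho>" using n unfolding \<rho>_def by auto
  have mN: "N \<in> {1..N}" using N3 by auto
  have Ir: "inv N \<rho> (xs, n) xs 0 n" using inv0[OF s] .
  have pr: "payoff N \<gamma> 0 N \<rho> (xs, n) = - \<gamma>"
    using inv_act_cop[OF s Ir n(2) _ mN] inv_play[OF Ir] n by (simp add: \<rho>_def PA_def pos_def R_def)
  have Is: "inv N (\<lambda>k. as_general (\<sigma> k)) (xs, n) xs 0 n" using inv0[OF s] .
  have Is1: "inv N (\<lambda>k. as_general (\<sigma> k)) (xs, n) xs 1 (next_tok N n)"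
    using inv_stay[OF Is] inv_play[OF Is] stay by simp
  have "- (\<gamma>^2) \<le> payoff N \<gamma> 0 N (\<lambda>k. as_general (\<sigma> k)) (xs, n)"
    using inv_bounds(2)[OF s Is1 g] by (simp add: numeral_2_eq_2)
  hence "\<gamma> \<le> \<gamma>^2" using le req pr by simp
  moreover have "\<gamma>^2 < \<gamma>" using g by (simp add: power2_eq_square)
  ultimately show False by simp
qed

lemma CR_rob:
  assumes opt: "opt_pair V E N \<gamma> 0 N \<sigma>" and g: "0 < \<gamma>" "\<gamma> < 1"
    and s: "(xs, N) \<in> S_nc V N"
  shows "\<sigma> N (xs, N) = xs!(N-1)"
proof (rule ccontr)
  assume ne: "\<sigma> N (xs, N) \<noteq> xs!(N-1)"
  have ps: "\<forall>k\<in>{1..N}. pstrategy V E N k (\<sigma> k)" using opt unfolding opt_pair_def by blast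
  hence vV: "\<sigma> N (xs, N) \<in> V" using pstrat_val s N3 by auto
  define \<tau> where "\<tau> = as_general (PA N N :: 'v state \<Rightarrow> 'v)"
  have gt: "gstrategy V E N N \<tau>" unfolding \<tau>_def using gstrat_of_pstrat pstrat_PA by blast
  have le: "payoff N \<gamma> 0 N ((\<lambda>k. as_general (\<sigma> k))(N := \<tau>)) (xs, N) \<le> payoff N \<gamma> 0 N (\<lambda>k. as_general (\<sigma> k)) (xs, N)"
    using opt s gt unfolding opt_pair_def by blast
  have mN: "N \<in> {1..N}" using N3 by auto
  have Is: "inv N (\<lambda>k. as_general (\<sigma> k)) (xs, N) xs 0 N" using inv0[OF s] .
  have ps1: "payoff N \<gamma> 0 N (\<lambda>k. as_general (\<sigma> k)) (xs, N) = - \<gamma>"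
  proof -
    have "payoff N \<gamma> 0 N (\<lambda>k. as_general (\<sigma> k)) (xs, N) = R N N N * \<gamma> ^ Suc 0"
      by (rule inv_act[OF s Is]) (use vV ne inv_play[OF Is] N3 in auto)
    thus ?thesis by (simp add: R_def)
  qed
  have Ir: "inv N ((\<lambda>k. as_general (\<sigma> k))(N := \<tau>)) (xs, N) xs 0 N" using inv0[OF s] .
  have Ir1: "inv N ((\<lambda>k. as_general (\<sigma> k))(N := \<tau>)) (xs, N) xs 1 1"
    using inv_stay[OF Ir] inv_play[OF Ir] by (simp add: \<tau>_def PA_def pos_def)
  have "- (\<gamma>^2) \<le> payoff N \<gamma> 0 N ((\<lambda>k. as_general (\<sigma> k))(N := \<tau>)) (xs, N)"
    using inv_bounds(2)[OF s Ir1 g] by (simp add: numeral_2_eq_2)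
  hence "\<gamma> \<le> \<gamma>^2" using le ps1 by simp
  moreover have "\<gamma>^2 < \<gamma>" using g by (simp add: power2_eq_square)
  ultimately show False by simp
qed

lemma G1_rob:
  assumes opt: "opt_pair V E N \<gamma> 0 1 \<sigma>" and g: "0 < \<gamma>" "\<gamma> < 1" and g1: "1 / (real N - 1) < \<gamma>"
    and s: "(xs, N) \<in> S_nc V N"
  shows "\<sigma> N (xs, N) \<noteq> xs!(N-1)"
proof
  assume stay: "\<sigma> N (xs, N) = xs!(N-1)"
  have ps: "\<forall>k\<in>{1..N}. pstrategy V E N k (\<sigma> k)" using opt unfolding opt_pair_def by blast
  define \<rho> where "\<rho> = (\<lambda>k. as_general (\<sigma> k))(N := as_general (PB N N))"
  have gs: "\<forall>k\<in>{1..N} - {1}. gstrategy V E N k (\<rho> k)"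
    using ps N3 by (auto simp: \<rho>_def intro!: gstrat_of_pstrat pstrat_PB)
  have le1: "payoff N \<gamma> 0 1 (\<lambda>k. as_general (\<sigma> k)) (xs, N) \<le> payoff N \<gamma> 0 1 (\<rho>(1 := as_general (\<sigma> 1))) (xs, N)"
    using opt s gs unfolding opt_pair_def by blast
  have req: "\<rho>(1 := as_general (\<sigma> 1)) = \<rho>" using N3 unfolding \<rho>_def by auto
  have mN: "1 \<in> {1..N}" using N3 by auto
  have Ir: "inv N \<rho> (xs, N) xs 0 N" using inv0[OF s] .
  have pr: "payoff N \<gamma> 0 1 \<rho> (xs, N) = \<gamma> / (real N - 1)"
    using inv_act_rob[OF s Ir _ mN] inv_play[OF Ir] N3 by (simp add: \<rho>_def PB_def pos_def R_def)
  define \<tau> where "\<tau> = as_general (PA N 1 :: 'v state \<Rightarrow> 'v)"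
  have gt: "gstrategy V E N 1 \<tau>" unfolding \<tau>_def using gstrat_of_pstrat pstrat_PA by blast
  have le2: "payoff N \<gamma> 0 1 ((\<lambda>k. as_general (\<sigma> k))(1 := \<tau>)) (xs, N) \<le> payoff N \<gamma> 0 1 (\<lambda>k. as_general (\<sigma> k)) (xs, N)"
    using opt s gt unfolding opt_pair_def by blast
  have It: "inv N ((\<lambda>k. as_general (\<sigma> k))(1 := \<tau>)) (xs, N) xs 0 N" using inv0[OF s] .
  have It1: "inv N ((\<lambda>k. as_general (\<sigma> k))(1 := \<tau>)) (xs, N) xs 1 1"
    using inv_stay[OF It] inv_play[OF It] stay N3 by simp
  have pt: "payoff N \<gamma> 0 1 ((\<lambda>k. as_general (\<sigma> k))(1 := \<tau>)) (xs, N) = \<gamma>^2"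
    using inv_act_cop[OF s It1 _ _ mN] inv_play[OF It1] N3
    by (simp add: \<tau>_def PA_def pos_def R_def numeral_2_eq_2)
  have "\<gamma>^2 \<le> \<gamma> / (real N - 1)" using le1 le2 req pr pt by simp
  hence "\<gamma> * \<gamma> \<le> \<gamma> * (1 / (real N - 1))" by (simp add: power2_eq_square)
  hence "\<gamma> \<le> 1 / (real N - 1)" using g mult_le_cancel_left_pos[of \<gamma> \<gamma> "1 / (real N - 1)"] by blast
  thus False using g1 by simp
qed

lemma reach_up:
  assumes s: "(xs, n0) \<in> S_nc V N" and k: "k \<in> {1..N}"
  shows "k + j \<le> N \<Longrightarrow> reachable V E N (xs, k) (xs, k + j)"
proof (induction j)
  case 0 thus ?case unfolding reachable_def by simp
next
  case (Suc j)
  have kj: "k + j \<in> {1..N}" "k + j < N" using Suc.prems k by auto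
  have sn: "(xs, k + j) \<in> S_nc V N" using Snc_fst[OF s kj(1)] .
  have "step_rel V E N (xs, k + j) (xs, k + Suc j)"
    unfolding step_rel_def
  proof (intro conjI bexI)
    show "(xs, k + j) \<in> S_nc V N" by (rule sn)
    show "pos (xs, k + j) (snd (xs, k + j)) \<in> nbhd V E (pos (xs, k + j) (snd (xs, k + j)))"
      using pos_V[OF sn kj(1)] unfolding nbhd_def by simp
    show "(xs, k + Suc j) = move N (xs, k + j) (pos (xs, k + j) (snd (xs, k + j)))"
      using kj by (simp add: move_def pos_def next_tok_def)
  qed
  moreover have "k + j \<le> N" using Suc.prems by simp
  hence "(step_rel V E N)\<^sup>*\<^sup>* (xs, k) (xs, k + j)" using Suc.IH unfolding reachable_def by simp
  ultimately show ?case unfolding reachable_def by (meson rtranclp.rtrancl_into_rtrancl)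
qed

lemma reach_all:
  assumes s: "(xs, n0) \<in> S_nc V N" and n: "n \<in> {1..N}"
  shows "reachable V E N (xs, n0) (xs, n)"
proof -
  have n0: "n0 \<in> {1..N}" using Snc_D[OF s] by auto
  show ?thesis
  proof (cases "n0 \<le> n")
    case True
    thus ?thesis using reach_up[OF s n0, of "n - n0"] n by simp
  next
    case False
    have r1: "reachable V E N (xs, n0) (xs, N)" using reach_up[OF s n0, of "N - n0"] n0 by simp
    have sN: "(xs, N) \<in> S_nc V N" using Snc_fst[OF s] N3 by auto
    have "step_rel V E N (xs, N) (xs, 1)"
      unfolding step_rel_def
    proof (intro conjI bexI)
      show "(xs, N) \<in> S_nc V N" by (rule sN)
      show "pos (xs, N) (snd (xs, N)) \<in> nbhd V E (pos (xs, N) (snd (xs, N)))"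
        using pos_V[OF sN] N3 unfolding nbhd_def by simp
      show "(xs, 1) = move N (xs, N) (pos (xs, N) (snd (xs, N)))"
        using Snc_D[OF sN] N3 by (simp add: move_def pos_def next_tok_def)
    qed
    hence r2: "reachable V E N (xs, n0) (xs, 1)" using r1 unfolding reachable_def
      by (meson rtranclp.rtrancl_into_rtrancl)
    have "reachable V E N (xs, 1) (xs, 1 + (n - 1))" using reach_up[OF s, of 1 "n-1"] n N3 by auto
    thus ?thesis using r2 n unfolding reachable_def by auto
  qed
qed

end


lemma G2_intro_from:
  assumes sg: "simple_graph V E" and gc: "graph_connected V E" and c: "card V = 2" and N: "N > 3"
  shows "\<exists>a b. G2 V E N a b"
proof -
  obtain a b where ab: "V = {a, b}" "a \<noteq> b" using c by (meson card_2_iff)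
  have "E\<^sup>*\<^sup>* a b" using gc ab unfolding graph_connected_def by auto
  then obtain z where "E a z" using ab(2) by (metis converse_rtranclpE)
  moreover have "z \<in> V" "z \<noteq> a" using sg \<open>E a z\<close> unfolding simple_graph_def by auto
  ultimately have Eab: "E a b" using ab by auto
  hence "E b a" using sg unfolding simple_graph_def by auto
  thus ?thesis using ab Eab N unfolding G2_def by blast
qed

theorem mainTheorem3:
  fixes V :: "'v set" and E :: "'v \<Rightarrow> 'v \<Rightarrow> bool" and N :: nat and s0 :: "'v state"
  assumes "simple_graph V E" and "graph_connected V E" and "card V = 2"
    and "N > 3" and "s0 \<in> S_nc V N"
  shows "(\<forall>\<gamma>::real. 0 < \<gamma> \<and> \<gamma> < 1 \<longrightarrow>
            (\<exists>\<phi>. trigger_choice V E N \<gamma> 0 \<phi> \<and> \<not> positional_trigger V E N \<gamma> 0 s0 \<phi>))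
       \<and> (\<forall>\<gamma>::real. 0 < \<gamma> \<and> \<gamma> < 1 \<longrightarrow>
            ((\<exists>\<phi>. trigger_choice V E N \<gamma> 0 \<phi> \<and> positional_trigger V E N \<gamma> 0 s0 \<phi>)
              \<longleftrightarrow> \<gamma> \<le> 1 / (real N - 1)))"
proof -
  obtain a b where G: "G2 V E N a b" using G2_intro_from assms by blast
  interpret G2 V E N a b by (rule G)
  obtain xs n0 where s0e: "s0 = (xs, n0)" by (cases s0)
  have cfg: "(xs, n0) \<in> S_nc V N" using assms(5) s0e by simp
  note D = Snc_D[OF cfg]
  have N3: "3 < N" by (rule N3)
  have s1: "(xs, 1) \<in> S_nc V N" and sN: "(xs, N) \<in> S_nc V N" using Snc_fst[OF cfg] N3 by auto
  have r1: "reachable V E N s0 (xs, 1)" and rN: "reachable V E N s0 (xs, N)"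
    using reach_all[OF cfg] N3 s0e by auto
  have x01: "xs!0 \<noteq> xs!(N-1)" using D(5)[of 1] N3 by simp
  have optA: "opt_pair V E N \<gamma> 0 m (PA N)" if "m \<in> {1..N}" "0 < \<gamma>" "\<gamma> < 1"
     "m = 1 \<longrightarrow> \<gamma> \<le> 1 / (real N - 1)" for m \<gamma>
  proof (cases "m = N")
    case True thus ?thesis using opt_PA_rob that by simp
  next
    case False thus ?thesis using opt_PA_cop[of m \<gamma>] that by auto
  qed
  have part1: "\<exists>\<phi>. trigger_choice V E N \<gamma> 0 \<phi> \<and> \<not> positional_trigger V E N \<gamma> 0 s0 \<phi>"
    if g: "0 < \<gamma>" "\<gamma> < 1" for \<gamma>
  proof -
    define \<phi> where "\<phi> = (\<lambda>(n::nat) (m::nat). if m = 3 then PC N n else if m = 1 \<and> 1 / (real N - 1) < \<gamma> then PB N n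
                          else (PA N n :: 'v state \<Rightarrow> 'v))"
    have tc: "trigger_choice V E N \<gamma> 0 \<phi>"
      unfolding trigger_choice_def
    proof
      fix m assume m: "m \<in> {1..N}"
      show "opt_pair V E N \<gamma> 0 m (\<lambda>n. \<phi> n m)"
      proof (cases "m = 3")
        case True thus ?thesis using opt_PC[OF g] by (simp add: \<phi>_def)
      next
        case F3: False
        show ?thesis
        proof (cases "m = 1 \<and> 1 / (real N - 1) < \<gamma>")
          case True thus ?thesis using opt_PB[OF g] by (simp add: \<phi>_def)
        next
          case False
          hence "(\<lambda>n. \<phi> n m) = PA N" using F3 by (auto simp: \<phi>_def)
          moreover have "m = 1 \<longrightarrow> \<gamma> \<le> 1 / (real N - 1)" using False by auto
          ultimately show ?thesis using optA[OF m g] by simp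
        qed
      qed
    qed
    have np: "\<not> positional_trigger V E N \<gamma> 0 s0 \<phi>"
    proof
      assume "positional_trigger V E N \<gamma> 0 s0 \<phi>"
      then obtain \<sigma>h where sh: "\<sigma>h \<in> CR_opt V E N \<gamma> 0 1"
        and ag: "\<forall>s. s \<in> S_nc V N \<and> snd s = 1 \<and> reachable V E N s0 s \<longrightarrow> \<phi> 1 3 s = \<sigma>h s"
        unfolding positional_trigger_def using N3 by fastforce
      obtain \<sigma>' where o: "opt_pair V E N \<gamma> 0 N \<sigma>'" and e: "\<sigma>h = \<sigma>' 1"
        using sh unfolding CR_opt_def by blast
      have "\<sigma>' 1 (xs, 1) = xs!(N-1)" using CR_cop[OF o g s1] N3 by simp
      moreover have "\<phi> 1 3 (xs, 1) = xs!0" by (simp add: \<phi>_def PC_def pos_def)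
      ultimately show False using ag s1 r1 e x01 by auto
    qed
    show ?thesis using tc np by blast
  qed
  have part2: "(\<exists>\<phi>. trigger_choice V E N \<gamma> 0 \<phi> \<and> positional_trigger V E N \<gamma> 0 s0 \<phi>)
              \<longleftrightarrow> \<gamma> \<le> 1 / (real N - 1)" if g: "0 < \<gamma>" "\<gamma> < 1" for \<gamma>
  proof
    assume "\<exists>\<phi>. trigger_choice V E N \<gamma> 0 \<phi> \<and> positional_trigger V E N \<gamma> 0 s0 \<phi>"
    then obtain \<phi> where tc: "trigger_choice V E N \<gamma> 0 \<phi>" and pt: "positional_trigger V E N \<gamma> 0 s0 \<phi>"
      by blast
    show "\<gamma> \<le> 1 / (real N - 1)"
    proof (rule ccontr)
      assume "\<not> ?thesis"
      hence gg: "1 / (real N - 1) < \<gamma>" by simp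
      have o1: "opt_pair V E N \<gamma> 0 1 (\<lambda>n. \<phi> n 1)" using tc N3 unfolding trigger_choice_def by auto
      have "\<phi> N 1 (xs, N) \<noteq> xs!(N-1)" using G1_rob[OF o1 g gg sN] by simp
      moreover obtain \<sigma>h where sh: "\<sigma>h \<in> CR_opt V E N \<gamma> 0 N"
        and ag: "\<forall>s. s \<in> S_nc V N \<and> snd s = N \<and> reachable V E N s0 s \<longrightarrow> \<phi> N 1 s = \<sigma>h s"
        using pt N3 unfolding positional_trigger_def by fastforce
      moreover obtain \<sigma>' where o: "opt_pair V E N \<gamma> 0 N \<sigma>'" and e: "\<sigma>h = \<sigma>' N"
        using sh unfolding CR_opt_def by blast
      ultimately show False using CR_rob[OF o g sN] sN rN by auto
    qed
  next
    assume gl: "\<gamma> \<le> 1 / (real N - 1)"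
    define \<phi> where "\<phi> = (\<lambda>(n::nat) (m::nat). (PA N n :: 'v state \<Rightarrow> 'v))"
    have oN: "opt_pair V E N \<gamma> 0 N (PA N)" using opt_PA_rob[OF g] .
    have tc: "trigger_choice V E N \<gamma> 0 \<phi>"
      unfolding trigger_choice_def \<phi>_def using optA g gl by auto
    have pt: "positional_trigger V E N \<gamma> 0 s0 \<phi>"
      unfolding positional_trigger_def
    proof (intro ballI)
      fix n m assume "n \<in> {1..N}" "m \<in> {1..N}"
      have "PA N n \<in> CR_opt V E N \<gamma> 0 n" unfolding CR_opt_def using oN by blast
      thus "\<exists>\<sigma>h\<in>CR_opt V E N \<gamma> 0 n. \<forall>s. s \<in> S_nc V N \<and> snd s = n \<and> reachable V E N s0 s \<longrightarrow> \<phi> n m s = \<sigma>h s"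
        by (auto simp: \<phi>_def)
    qed
    show "\<exists>\<phi>. trigger_choice V E N \<gamma> 0 \<phi> \<and> positional_trigger V E N \<gamma> 0 s0 \<phi>"
      using tc pt by blast
  qed
  show ?thesis using part1 part2 by blast
qed


end
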